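(* Let $P_1,Q_1\in\mathcal{PP}(k)$ and $P_2,Q_2\in\mathcal{PP}(l)$. The following conditions are equivalent: (1) $P_1P_2\leq Q_1Q_2$; (2) $P_1\triangleleft P_2\leq Q_1\triangleleft Q_2$; (3) $P_1\leq Q_1$ and $P_2\leq Q_2$.
   Context: A plane poset is a finite set with two partial orders $\leq_h,\leq_r$ such that two distinct elements are $\leq_h$-comparable iff they are not $\leq_r$-comparable; $\mathcal{PP}(n)$ is the set of isomorphism classes of plane posets with $n$ elements. On a plane poset, $x\leq y$ iff ($x\leq_h y$ or $x\leq_r y$) is a total order (known fact). For $P,Q\in\mathcal{PP}(n)$, $\theta_{P,Q}$ is the increasing bijection $P\to Q$, and $P\leq Q$ means: for all $x,y\in P$, $\theta_{P,Q}(x)\leq_h\theta_{P,Q}(y)$ in $Q$ implies $x\leq_h y$ in $P$. For plane posets $P,Q$: $PQ$ is the plane poset on $P\sqcup Q$ in which $P,Q$ are plane subposets, no element of $P$ is $\leq_h$-comparable with an element of $Q$, and $x<_r y$ for all $x\in P,y\in Q$; $P\triangleleft Q$ is the plane poset on $P\sqcup Q$ in which $P,Q$ are plane subposets, no element of $P$ is $\leq_r$-comparable with an element of $Q$, and $x<_h y$ for all $x\in P,y\in Q$. *)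

theory Defs
  imports Main
begin

text \<open>A plane poset with elements of type 'a is a triple (A, h, r): a finite carrier A
  and two relations h (the order \<le>h) and r (the order \<le>r) on A.\<close>

type_synonym 'a pp = "'a set \<times> ('a \<Rightarrow> 'a \<Rightarrow> bool) \<times> ('a \<Rightarrow> 'a \<Rightarrow> bool)"

definition pp_set :: "'a pp \<Rightarrow> 'a set" where "pp_set P = fst P"
definition pp_h :: "'a pp \<Rightarrow> 'a \<Rightarrow> 'a \<Rightarrow> bool" where "pp_h P = fst (snd P)"
definition pp_r :: "'a pp \<Rightarrow> 'a \<Rightarrow> 'a \<Rightarrow> bool" where "pp_r P = snd (snd P)"

definition partial_order_on_set :: "'a set \<Rightarrow> ('a \<Rightarrow> 'a \<Rightarrow> bool) \<Rightarrow> bool" where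
  "partial_order_on_set A R \<longleftrightarrow>
     (\<forall>x y. R x y \<longrightarrow> x \<in> A \<and> y \<in> A) \<and>
     (\<forall>x\<in>A. R x x) \<and>
     (\<forall>x\<in>A. \<forall>y\<in>A. R x y \<and> R y x \<longrightarrow> x = y) \<and>
     (\<forall>x\<in>A. \<forall>y\<in>A. \<forall>z\<in>A. R x y \<and> R y z \<longrightarrow> R x z)"

definition plane_poset :: "'a pp \<Rightarrow> bool" where
  "plane_poset P \<longleftrightarrow> finite (pp_set P) \<and>
     partial_order_on_set (pp_set P) (pp_h P) \<and>
     partial_order_on_set (pp_set P) (pp_r P) \<and>
     (\<forall>x\<in>pp_set P. \<forall>y\<in>pp_set P. x \<noteq> y \<longrightarrow>
        ((pp_h P x y \<or> pp_h P y x) \<longleftrightarrow> \<not> (pp_r P x y \<or> pp_r P y x)))"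

definition pp_tle :: "'a pp \<Rightarrow> 'a \<Rightarrow> 'a \<Rightarrow> bool" where
  "pp_tle P x y \<longleftrightarrow> pp_h P x y \<or> pp_r P x y"

definition incr_bij :: "'a pp \<Rightarrow> 'b pp \<Rightarrow> ('a \<Rightarrow> 'b) \<Rightarrow> bool" where
  "incr_bij P Q f \<longleftrightarrow> bij_betw f (pp_set P) (pp_set Q) \<and>
     (\<forall>x\<in>pp_set P. \<forall>y\<in>pp_set P. pp_tle P x y \<longrightarrow> pp_tle Q (f x) (f y))"

text \<open>P \<le> Q: for all x, y in P, \<theta>(x) \<le>h \<theta>(y) in Q implies x \<le>h y in P,
  where \<theta> is the (unique) increasing bijection P \<rightarrow> Q.\<close>
definition pp_le :: "'a pp \<Rightarrow> 'b pp \<Rightarrow> bool" where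
  "pp_le P Q \<longleftrightarrow> (\<forall>\<theta>. incr_bij P Q \<theta> \<longrightarrow>
     (\<forall>x\<in>pp_set P. \<forall>y\<in>pp_set P. pp_h Q (\<theta> x) (\<theta> y) \<longrightarrow> pp_h P x y))"

definition pp_prod :: "'a pp \<Rightarrow> 'b pp \<Rightarrow> ('a + 'b) pp" where
  "pp_prod P Q =
    (Inl ` pp_set P \<union> Inr ` pp_set Q,
     (\<lambda>u v. case (u, v) of
        (Inl x, Inl y) \<Rightarrow> pp_h P x y
      | (Inr x, Inr y) \<Rightarrow> pp_h Q x y
      | _ \<Rightarrow> False),
     (\<lambda>u v. case (u, v) of
        (Inl x, Inl y) \<Rightarrow> pp_r P x y
      | (Inr x, Inr y) \<Rightarrow> pp_r Q x y
      | (Inl x, Inr y) \<Rightarrow> x \<in> pp_set P \<and> y \<in> pp_set Q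
      | (Inr x, Inl y) \<Rightarrow> False))"

definition pp_tri :: "'a pp \<Rightarrow> 'b pp \<Rightarrow> ('a + 'b) pp" where
  "pp_tri P Q =
    (Inl ` pp_set P \<union> Inr ` pp_set Q,
     (\<lambda>u v. case (u, v) of
        (Inl x, Inl y) \<Rightarrow> pp_h P x y
      | (Inr x, Inr y) \<Rightarrow> pp_h Q x y
      | (Inl x, Inr y) \<Rightarrow> x \<in> pp_set P \<and> y \<in> pp_set Q
      | (Inr x, Inl y) \<Rightarrow> False),
     (\<lambda>u v. case (u, v) of
        (Inl x, Inl y) \<Rightarrow> pp_r P x y
      | (Inr x, Inr y) \<Rightarrow> pp_r Q x y
      | _ \<Rightarrow> False))"

end

theory Submission
  imports Defs
begin

definition lin :: "'a set \<Rightarrow> ('a \<Rightarrow> 'a \<Rightarrow> bool) \<Rightarrow> bool" where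
  "lin A R \<longleftrightarrow> (\<forall>x\<in>A. \<forall>y\<in>A. R x y \<or> R y x) \<and> (\<forall>x\<in>A. \<forall>y\<in>A. R x y \<and> R y x \<longrightarrow> x = y)
     \<and> (\<forall>x\<in>A. \<forall>y\<in>A. \<forall>z\<in>A. R x y \<and> R y z \<longrightarrow> R x z)"

definition rank :: "'a set \<Rightarrow> ('a \<Rightarrow> 'a \<Rightarrow> bool) \<Rightarrow> 'a \<Rightarrow> nat" where
  "rank A R x = card {y\<in>A. R y x}"

lemma lin_pp: assumes "plane_poset P" shows "lin (pp_set P) (pp_tle P)"
proof -
  let ?A = "pp_set P" and ?h = "pp_h P" and ?r = "pp_r P"
  have all: "finite ?A \<and> partial_order_on_set ?A ?h \<and> partial_order_on_set ?A ?r \<and>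
     (\<forall>x\<in>?A. \<forall>y\<in>?A. x \<noteq> y \<longrightarrow> ((?h x y \<or> ?h y x) \<longleftrightarrow> \<not> (?r x y \<or> ?r y x)))"
    using assms unfolding plane_poset_def .
  have ph: "partial_order_on_set ?A ?h" using all by (elim conjE)
  have pr: "partial_order_on_set ?A ?r" using all by (elim conjE)
  have pl: "\<forall>x\<in>?A. \<forall>y\<in>?A. x \<noteq> y \<longrightarrow> ((?h x y \<or> ?h y x) \<longleftrightarrow> \<not> (?r x y \<or> ?r y x))"
    using all by (elim conjE)
  have ph': "(\<forall>x y. ?h x y \<longrightarrow> x \<in> ?A \<and> y \<in> ?A) \<and> (\<forall>x\<in>?A. ?h x x) \<and> (\<forall>x\<in>?A. \<forall>y\<in>?A. ?h x y \<and> ?h y x \<longrightarrow> x = y)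
     \<and> (\<forall>x\<in>?A. \<forall>y\<in>?A. \<forall>z\<in>?A. ?h x y \<and> ?h y z \<longrightarrow> ?h x z)"
    using ph unfolding partial_order_on_set_def .
  have pr': "(\<forall>x y. ?r x y \<longrightarrow> x \<in> ?A \<and> y \<in> ?A) \<and> (\<forall>x\<in>?A. ?r x x) \<and> (\<forall>x\<in>?A. \<forall>y\<in>?A. ?r x y \<and> ?r y x \<longrightarrow> x = y)
     \<and> (\<forall>x\<in>?A. \<forall>y\<in>?A. \<forall>z\<in>?A. ?r x y \<and> ?r y z \<longrightarrow> ?r x z)"
    using pr unfolding partial_order_on_set_def .
  have hrefl: "\<forall>x\<in>?A. ?h x x" using ph' by (elim conjE)
  have hant: "\<forall>x\<in>?A. \<forall>y\<in>?A. ?h x y \<and> ?h y x \<longrightarrow> x = y" using ph' by (elim conjE)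
  have htr: "\<forall>x\<in>?A. \<forall>y\<in>?A. \<forall>z\<in>?A. ?h x y \<and> ?h y z \<longrightarrow> ?h x z" using ph' by (elim conjE)
  have rant: "\<forall>x\<in>?A. \<forall>y\<in>?A. ?r x y \<and> ?r y x \<longrightarrow> x = y" using pr' by (elim conjE)
  have rtr: "\<forall>x\<in>?A. \<forall>y\<in>?A. \<forall>z\<in>?A. ?r x y \<and> ?r y z \<longrightarrow> ?r x z" using pr' by (elim conjE)
  have excl: "\<And>x y. x \<in> ?A \<Longrightarrow> y \<in> ?A \<Longrightarrow> x \<noteq> y \<Longrightarrow> ?h x y \<or> ?h y x \<Longrightarrow> ?r x y \<or> ?r y x \<Longrightarrow> False"
  proof -
    fix x y assume a: "x \<in> ?A" "y \<in> ?A" "x \<noteq> y" "?h x y \<or> ?h y x" "?r x y \<or> ?r y x"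
    have "(?h x y \<or> ?h y x) \<longleftrightarrow> \<not> (?r x y \<or> ?r y x)" using bspec[OF bspec[OF pl a(1)] a(2)] a(3) by simp
    thus False using a(4,5) by simp
  qed
  have cover: "\<And>x y. x \<in> ?A \<Longrightarrow> y \<in> ?A \<Longrightarrow> x \<noteq> y \<Longrightarrow> ?h x y \<or> ?h y x \<or> ?r x y \<or> ?r y x"
  proof -
    fix x y assume a: "x \<in> ?A" "y \<in> ?A" "x \<noteq> y"
    have "(?h x y \<or> ?h y x) \<longleftrightarrow> \<not> (?r x y \<or> ?r y x)" using bspec[OF bspec[OF pl a(1)] a(2)] a(3) by simp
    thus "?h x y \<or> ?h y x \<or> ?r x y \<or> ?r y x" by blast
  qed
  have tot: "\<forall>x\<in>?A. \<forall>y\<in>?A. pp_tle P x y \<or> pp_tle P y x"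
  proof (intro ballI)
    fix x y assume xy: "x \<in> ?A" "y \<in> ?A"
    show "pp_tle P x y \<or> pp_tle P y x"
    proof (cases "x = y")
      case True thus ?thesis using hrefl xy unfolding pp_tle_def by auto
    next
      case False thus ?thesis using cover[OF xy False] unfolding pp_tle_def by blast
    qed
  qed
  have ant: "\<forall>x\<in>?A. \<forall>y\<in>?A. pp_tle P x y \<and> pp_tle P y x \<longrightarrow> x = y"
  proof (intro ballI impI)
    fix x y assume xy: "x \<in> ?A" "y \<in> ?A" and a: "pp_tle P x y \<and> pp_tle P y x"
    show "x = y"
    proof (rule ccontr)
      assume d: "x \<noteq> y"
      from a have "(?h x y \<or> ?r x y) \<and> (?h y x \<or> ?r y x)" unfolding pp_tle_def by auto
      thus False
      proof (elim conjE disjE)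
        assume "?h x y" "?h y x" thus False using hant xy d by blast
      next
        assume "?r x y" "?r y x" thus False using rant xy d by blast
      next
        assume "?h x y" "?r y x" thus False using excl[OF xy d] by blast
      next
        assume "?r x y" "?h y x" thus False using excl[OF xy d] by blast
      qed
    qed
  qed
  have tr: "\<forall>x\<in>?A. \<forall>y\<in>?A. \<forall>z\<in>?A. pp_tle P x y \<and> pp_tle P y z \<longrightarrow> pp_tle P x z"
  proof (intro ballI impI)
    fix x y z assume xyz: "x \<in> ?A" "y \<in> ?A" "z \<in> ?A" and a: "pp_tle P x y \<and> pp_tle P y z"
    show "pp_tle P x z"
    proof (cases "x = y \<or> y = z \<or> x = z")
      case True then show ?thesis using a xyz hrefl unfolding pp_tle_def by auto
    next
      case False
      hence d: "x \<noteq> y" "y \<noteq> z" "x \<noteq> z" by auto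
      show ?thesis
      proof (rule ccontr)
        assume nxz: "\<not> pp_tle P x z"
        hence zx: "?h z x \<or> ?r z x" using tot xyz unfolding pp_tle_def by auto
        from a have "(?h x y \<or> ?r x y) \<and> (?h y z \<or> ?r y z)" unfolding pp_tle_def by auto
        then show False
        proof (elim conjE disjE)
          assume "?h x y" "?h y z" thus False using htr xyz nxz unfolding pp_tle_def by blast
        next
          assume "?r x y" "?r y z" thus False using rtr xyz nxz unfolding pp_tle_def by blast
        next
          assume 1: "?h x y" "?r y z"
          from zx show False
          proof
            assume "?h z x" hence "?h z y" using 1 htr xyz by blast
            thus False using 1 excl xyz d by blast
          next
            assume "?r z x" hence "?r y x" using 1 rtr xyz by blast
            thus False using 1 excl xyz d by blast
          qed
        next
          assume 1: "?r x y" "?h y z"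
          from zx show False
          proof
            assume "?h z x" hence "?h y x" using 1 htr xyz by blast
            thus False using 1 excl xyz d by blast
          next
            assume "?r z x" hence "?r z y" using 1 rtr xyz by blast
            thus False using 1 excl xyz d by blast
          qed
        qed
      qed
    qed
  qed
  show ?thesis unfolding lin_def using tot ant tr by blast
qed

lemma rank_lt: assumes "finite A" "lin A R" "x \<in> A" "y \<in> A" "R x y" "x \<noteq> y"
  shows "rank A R x < rank A R y"
proof -
  have "{z\<in>A. R z x} \<subset> {z\<in>A. R z y}"
  proof
    show "{z\<in>A. R z x} \<subseteq> {z\<in>A. R z y}" using assms unfolding lin_def by blast
    have "y \<notin> {z\<in>A. R z x}" using assms unfolding lin_def by blast
    moreover have "y \<in> {z\<in>A. R z y}" using assms unfolding lin_def by blast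
    ultimately show "{z\<in>A. R z x} \<noteq> {z\<in>A. R z y}" by blast
  qed
  thus ?thesis unfolding rank_def using assms(1) by (simp add: psubset_card_mono)
qed

lemma rank_inj: assumes "finite A" "lin A R" shows "inj_on (rank A R) A"
proof (rule inj_onI)
  fix x y assume xy: "x \<in> A" "y \<in> A" "rank A R x = rank A R y"
  show "x = y"
  proof (rule ccontr)
    assume "x \<noteq> y"
    moreover have "R x y \<or> R y x" using assms xy unfolding lin_def by blast
    ultimately show False using rank_lt[OF assms] xy by (metis less_irrefl)
  qed
qed

lemma rank_range: assumes "finite A" "lin A R" "x \<in> A" shows "rank A R x \<in> {1..card A}"
proof -
  have "x \<in> {y\<in>A. R y x}" using assms unfolding lin_def by blast
  hence "card {y\<in>A. R y x} \<ge> 1" using assms(1)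
    by (metis (no_types, lifting) One_nat_def Suc_leI card_gt_0_iff empty_iff finite_subset mem_Collect_eq subsetI)
  moreover have "card {y\<in>A. R y x} \<le> card A" using assms(1) by (intro card_mono) auto
  ultimately show ?thesis unfolding rank_def by auto
qed

lemma rank_bij: assumes "finite A" "lin A R" shows "bij_betw (rank A R) A {1..card A}"
proof -
  have "rank A R ` A \<subseteq> {1..card A}" using rank_range[OF assms] by blast
  moreover have "card (rank A R ` A) = card A" using rank_inj[OF assms] by (simp add: card_image)
  ultimately have "rank A R ` A = {1..card A}" by (intro card_subset_eq) auto
  thus ?thesis using rank_inj[OF assms] unfolding bij_betw_def by blast
qed

lemma rank_le_imp: assumes "finite A" "lin A R" "x \<in> A" "y \<in> A" "rank A R x \<le> rank A R y"
  shows "R x y"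
proof (rule ccontr)
  assume "\<not> R x y"
  hence "R y x" "y \<noteq> x" using assms unfolding lin_def by blast+
  thus False using rank_lt[OF assms(1,2,4,3)] assms(5) by simp
qed

lemma exists_iso: assumes "finite A" "lin A R" "finite B" "lin B S" "card A = card B"
  shows "\<exists>f. bij_betw f A B \<and> (\<forall>x\<in>A. \<forall>y\<in>A. R x y \<longrightarrow> S (f x) (f y))"
proof -
  define g where "g = the_inv_into B (rank B S)"
  have bA: "bij_betw (rank A R) A {1..card B}" using rank_bij[OF assms(1,2)] assms(5) by simp
  have bB: "bij_betw (rank B S) B {1..card B}" using rank_bij[OF assms(3,4)] .
  have bg: "bij_betw g {1..card B} B" unfolding g_def by (rule bij_betw_the_inv_into[OF bB])
  have f: "bij_betw (g \<circ> rank A R) A B" by (rule bij_betw_trans[OF bA bg])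
  have rk: "rank B S (g (rank A R x)) = rank A R x" if "x \<in> A" for x
    unfolding g_def using f_the_inv_into_f_bij_betw[OF bB] bA that
    by (metis bij_betwE)
  have "\<forall>x\<in>A. \<forall>y\<in>A. R x y \<longrightarrow> S ((g \<circ> rank A R) x) ((g \<circ> rank A R) y)"
  proof (intro ballI impI)
    fix x y assume xy: "x \<in> A" "y \<in> A" "R x y"
    have "rank A R x \<le> rank A R y"
      using rank_lt[OF assms(1,2) xy] xy by (cases "x = y") auto
    moreover have "(g \<circ> rank A R) x \<in> B" "(g \<circ> rank A R) y \<in> B" using f xy bij_betwE by blast+
    ultimately show "S ((g \<circ> rank A R) x) ((g \<circ> rank A R) y)"
      using rank_le_imp[OF assms(3,4)] rk xy by simp
  qed
  thus ?thesis using f by blast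
qed

lemma rank_pres: assumes "finite A" "lin A R" "finite B" "lin B S" "bij_betw f A B"
  "\<forall>x\<in>A. \<forall>y\<in>A. R x y \<longrightarrow> S (f x) (f y)" "x \<in> A"
  shows "rank B S (f x) = rank A R x"
proof -
  have inj: "inj_on f A" using assms(5) by (rule bij_betw_imp_inj_on)
  have fB: "f ` A = B" using assms(5) by (rule bij_betw_imp_surj_on)
  have "{z\<in>B. S z (f x)} = f ` {y\<in>A. R y x}"
  proof
    show "f ` {y\<in>A. R y x} \<subseteq> {z\<in>B. S z (f x)}" using assms(6,7) fB by blast
    show "{z\<in>B. S z (f x)} \<subseteq> f ` {y\<in>A. R y x}"
    proof
      fix z assume z: "z \<in> {z\<in>B. S z (f x)}"
      then obtain y where y: "y \<in> A" "z = f y" using fB by blast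
      have "R y x"
      proof (rule ccontr)
        assume "\<not> R y x"
        hence "R x y" "x \<noteq> y" using assms(2,7) y unfolding lin_def by blast+
        hence "S (f x) (f y)" using assms(6,7) y by blast
        moreover have "S (f y) (f x)" using z y by simp
        ultimately have "f x = f y" using assms(4) fB y assms(7) unfolding lin_def by blast
        thus False using inj y assms(7) \<open>x \<noteq> y\<close> inj_on_def by metis
      qed
      thus "z \<in> f ` {y\<in>A. R y x}" using y by blast
    qed
  qed
  moreover have "inj_on f {y\<in>A. R y x}" using inj by (rule inj_on_subset) auto
  ultimately show ?thesis unfolding rank_def by (simp add: card_image)
qed

definition sumtle :: "'a pp \<Rightarrow> 'b pp \<Rightarrow> ('a+'b) \<Rightarrow> ('a+'b) \<Rightarrow> bool" where
"sumtle P Q u v = (case u of Inl x \<Rightarrow> (case v of Inl y \<Rightarrow> pp_tle P x y | Inr y \<Rightarrow> x \<in> pp_set P \<and> y \<in> pp_set Q)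
   | Inr x \<Rightarrow> (case v of Inl y \<Rightarrow> False | Inr y \<Rightarrow> pp_tle Q x y))"

lemma tle_prod: "pp_tle (pp_prod P Q) = sumtle P Q"
  by (intro ext, rename_tac u v, case_tac u; case_tac v)
     (simp_all add: pp_tle_def pp_prod_def pp_h_def pp_r_def sumtle_def)

lemma tle_tri: "pp_tle (pp_tri P Q) = sumtle P Q"
  by (intro ext, rename_tac u v, case_tac u; case_tac v)
     (simp_all add: pp_tle_def pp_tri_def pp_h_def pp_r_def sumtle_def)

lemma set_prod: "pp_set (pp_prod P Q) = Inl ` pp_set P \<union> Inr ` pp_set Q"
  by (simp add: pp_set_def pp_prod_def)
lemma set_tri: "pp_set (pp_tri P Q) = Inl ` pp_set P \<union> Inr ` pp_set Q"
  by (simp add: pp_set_def pp_tri_def)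

lemma mem_sum[simp]: "Inl a \<in> Inl ` A \<longleftrightarrow> a \<in> A" "Inr b \<in> Inr ` B \<longleftrightarrow> b \<in> B"
  "Inl a \<notin> Inr ` B" "Inr b \<notin> Inl ` A"
  by auto

lemma sumtle_simps[simp]:
  "sumtle P Q (Inl a) (Inl a') = pp_tle P a a'"
  "sumtle P Q (Inr b) (Inr b') = pp_tle Q b b'"
  "sumtle P Q (Inl a) (Inr b) = (a \<in> pp_set P \<and> b \<in> pp_set Q)"
  "sumtle P Q (Inr b) (Inl a) = False"
  by (simp_all add: sumtle_def)

lemma lin_sum: assumes "lin (pp_set P) (pp_tle P)" "lin (pp_set Q) (pp_tle Q)"
  shows "lin (Inl ` pp_set P \<union> Inr ` pp_set Q) (sumtle P Q)"
proof -
  have P1: "\<forall>x\<in>pp_set P. \<forall>y\<in>pp_set P. pp_tle P x y \<or> pp_tle P y x"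
    using assms(1) unfolding lin_def by (elim conjE)
  have P2: "\<forall>x\<in>pp_set P. \<forall>y\<in>pp_set P. pp_tle P x y \<and> pp_tle P y x \<longrightarrow> x = y"
    using assms(1) unfolding lin_def by (elim conjE)
  have P3: "\<forall>x\<in>pp_set P. \<forall>y\<in>pp_set P. \<forall>z\<in>pp_set P. pp_tle P x y \<and> pp_tle P y z \<longrightarrow> pp_tle P x z"
    using assms(1) unfolding lin_def by (elim conjE)
  have Q1: "\<forall>x\<in>pp_set Q. \<forall>y\<in>pp_set Q. pp_tle Q x y \<or> pp_tle Q y x"
    using assms(2) unfolding lin_def by (elim conjE)
  have Q2: "\<forall>x\<in>pp_set Q. \<forall>y\<in>pp_set Q. pp_tle Q x y \<and> pp_tle Q y x \<longrightarrow> x = y"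
    using assms(2) unfolding lin_def by (elim conjE)
  have Q3: "\<forall>x\<in>pp_set Q. \<forall>y\<in>pp_set Q. \<forall>z\<in>pp_set Q. pp_tle Q x y \<and> pp_tle Q y z \<longrightarrow> pp_tle Q x z"
    using assms(2) unfolding lin_def by (elim conjE)
  let ?S = "Inl ` pp_set P \<union> Inr ` pp_set Q"
  have t: "sumtle P Q u v \<or> sumtle P Q v u" if "u \<in> ?S" "v \<in> ?S" for u v
    using that P1 Q1 by (cases u; cases v) auto
  have a: "u = v" if "u \<in> ?S" "v \<in> ?S" "sumtle P Q u v" "sumtle P Q v u" for u v
    using that P2 Q2 by (cases u; cases v) auto
  have r: "sumtle P Q u w" if "u \<in> ?S" "v \<in> ?S" "w \<in> ?S" "sumtle P Q u v" "sumtle P Q v w" for u v w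
    using that by (cases u; cases v; cases w; simp; blast intro: P3[rule_format] Q3[rule_format])
  show ?thesis unfolding lin_def
  proof (intro conjI ballI impI)
    fix x y assume "x \<in> ?S" "y \<in> ?S"
    thus "sumtle P Q x y \<or> sumtle P Q y x" by (rule t)
  next
    fix x y assume "x \<in> ?S" "y \<in> ?S" "sumtle P Q x y \<and> sumtle P Q y x"
    thus "x = y" using a by blast
  next
    fix x y z assume "x \<in> ?S" "y \<in> ?S" "z \<in> ?S" "sumtle P Q x y \<and> sumtle P Q y z"
    thus "sumtle P Q x z" using r[of x y z] by blast
  qed
qed

lemma rank_Inl: assumes "x \<in> pp_set P"
  shows "rank (Inl ` pp_set P \<union> Inr ` pp_set Q) (sumtle P Q) (Inl x) = rank (pp_set P) (pp_tle P) x"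
proof -
  have "{u \<in> Inl ` pp_set P \<union> Inr ` pp_set Q. sumtle P Q u (Inl x)} = Inl ` {y\<in>pp_set P. pp_tle P y x}"
    by auto
  thus ?thesis unfolding rank_def by (simp add: card_image)
qed

lemma rank_Inr: assumes "y \<in> pp_set Q" "finite (pp_set P)" "finite (pp_set Q)"
  shows "rank (Inl ` pp_set P \<union> Inr ` pp_set Q) (sumtle P Q) (Inr y) = card (pp_set P) + rank (pp_set Q) (pp_tle Q) y"
proof -
  have "{u \<in> Inl ` pp_set P \<union> Inr ` pp_set Q. sumtle P Q u (Inr y)} = Inl ` pp_set P \<union> Inr ` {z\<in>pp_set Q. pp_tle Q z y}"
    using assms(1) by auto
  moreover have "card (Inl ` pp_set P \<union> Inr ` {z\<in>pp_set Q. pp_tle Q z y}) = card (pp_set P) + card {z\<in>pp_set Q. pp_tle Q z y}"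
    using assms by (subst card_Un_disjoint) (auto simp: card_image)
  ultimately show ?thesis unfolding rank_def by simp
qed

lemma compose:
  assumes "incr_bij P1 Q1 f1" "incr_bij P2 Q2 f2"
    and "pp_set P = Inl ` pp_set P1 \<union> Inr ` pp_set P2" "pp_tle P = sumtle P1 P2"
    and "pp_set Q = Inl ` pp_set Q1 \<union> Inr ` pp_set Q2" "pp_tle Q = sumtle Q1 Q2"
  shows "incr_bij P Q (case_sum (Inl \<circ> f1) (Inr \<circ> f2))"
proof -
  have b1: "bij_betw f1 (pp_set P1) (pp_set Q1)" and m1: "\<forall>x\<in>pp_set P1. \<forall>y\<in>pp_set P1. pp_tle P1 x y \<longrightarrow> pp_tle Q1 (f1 x) (f1 y)"
    using assms(1) unfolding incr_bij_def by auto
  have b2: "bij_betw f2 (pp_set P2) (pp_set Q2)" and m2: "\<forall>x\<in>pp_set P2. \<forall>y\<in>pp_set P2. pp_tle P2 x y \<longrightarrow> pp_tle Q2 (f2 x) (f2 y)"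
    using assms(2) unfolding incr_bij_def by auto
  have i1: "inj_on f1 (pp_set P1)" using b1 by (rule bij_betw_imp_inj_on)
  have i2: "inj_on f2 (pp_set P2)" using b2 by (rule bij_betw_imp_inj_on)
  have s1: "f1 ` pp_set P1 = pp_set Q1" using b1 by (rule bij_betw_imp_surj_on)
  have s2: "f2 ` pp_set P2 = pp_set Q2" using b2 by (rule bij_betw_imp_surj_on)
  let ?f = "case_sum (Inl \<circ> f1) (Inr \<circ> f2)"
  have inj: "inj_on ?f (pp_set P)"
  proof (rule inj_onI)
    fix u v assume uv: "u \<in> pp_set P" "v \<in> pp_set P" "?f u = ?f v"
    show "u = v"
    proof (cases u; cases v)
      fix a b assume "u = Inl a" "v = Inl b" thus "u = v" using uv i1 assms(3) unfolding inj_on_def by auto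
    next
      fix a b assume "u = Inl a" "v = Inr b" thus "u = v" using uv by simp
    next
      fix a b assume "u = Inr a" "v = Inl b" thus "u = v" using uv by simp
    next
      fix a b assume "u = Inr a" "v = Inr b" thus "u = v" using uv i2 assms(3) unfolding inj_on_def by auto
    qed
  qed
  have "?f ` (Inl ` pp_set P1) = Inl ` (f1 ` pp_set P1)" by (simp add: image_image)
  moreover have "?f ` (Inr ` pp_set P2) = Inr ` (f2 ` pp_set P2)" by (simp add: image_image)
  ultimately have img: "?f ` pp_set P = pp_set Q"
    unfolding assms(3,5) image_Un s1 s2 by simp
  have mono: "\<forall>x\<in>pp_set P. \<forall>y\<in>pp_set P. pp_tle P x y \<longrightarrow> pp_tle Q (?f x) (?f y)"
  proof (intro ballI impI)
    fix u v assume uv: "u \<in> pp_set P" "v \<in> pp_set P" "pp_tle P u v"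
    show "pp_tle Q (?f u) (?f v)"
    proof (cases u; cases v)
      fix a b assume "u = Inl a" "v = Inl b" thus ?thesis using uv m1 assms(3,4,6) by auto
    next
      fix a b assume "u = Inl a" "v = Inr b" thus ?thesis using uv assms(3,4,6) s1 s2 by auto
    next
      fix a b assume "u = Inr a" "v = Inl b" thus ?thesis using uv assms(3,4,6) by auto
    next
      fix a b assume "u = Inr a" "v = Inr b" thus ?thesis using uv m2 assms(3,4,6) by auto
    qed
  qed
  show ?thesis unfolding incr_bij_def bij_betw_def using inj img mono by blast
qed

lemma decompose:
  assumes pp: "plane_poset P1" "plane_poset Q1" "plane_poset P2" "plane_poset Q2"
    and c1: "card (pp_set P1) = card (pp_set Q1)"
    and sP: "pp_set P = Inl ` pp_set P1 \<union> Inr ` pp_set P2" and tP: "pp_tle P = sumtle P1 P2"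
    and sQ: "pp_set Q = Inl ` pp_set Q1 \<union> Inr ` pp_set Q2" and tQ: "pp_tle Q = sumtle Q1 Q2"
    and f: "incr_bij P Q f"
  shows "\<exists>f1 f2. incr_bij P1 Q1 f1 \<and> incr_bij P2 Q2 f2 \<and> (\<forall>x\<in>pp_set P1. f (Inl x) = Inl (f1 x))
     \<and> (\<forall>y\<in>pp_set P2. f (Inr y) = Inr (f2 y))"
proof -
  have fin: "finite (pp_set P1)" "finite (pp_set Q1)" "finite (pp_set P2)" "finite (pp_set Q2)"
    using pp unfolding plane_poset_def by auto
  have l: "lin (pp_set P1) (pp_tle P1)" "lin (pp_set Q1) (pp_tle Q1)"
     "lin (pp_set P2) (pp_tle P2)" "lin (pp_set Q2) (pp_tle Q2)"
    by (rule lin_pp[OF pp(1)], rule lin_pp[OF pp(2)], rule lin_pp[OF pp(3)], rule lin_pp[OF pp(4)])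
  have lP: "lin (pp_set P) (pp_tle P)" unfolding sP tP by (rule lin_sum[OF l(1,3)])
  have lQ: "lin (pp_set Q) (pp_tle Q)" unfolding sQ tQ by (rule lin_sum[OF l(2,4)])
  have fP: "finite (pp_set P)" "finite (pp_set Q)" using fin sP sQ by auto
  have b: "bij_betw f (pp_set P) (pp_set Q)" and m: "\<forall>x\<in>pp_set P. \<forall>y\<in>pp_set P. pp_tle P x y \<longrightarrow> pp_tle Q (f x) (f y)"
    using f unfolding incr_bij_def by auto
  have inj: "inj_on f (pp_set P)" using b by (rule bij_betw_imp_inj_on)
  have img: "f ` pp_set P = pp_set Q" using b by (rule bij_betw_imp_surj_on)
  have rk: "rank (pp_set Q) (pp_tle Q) (f u) = rank (pp_set P) (pp_tle P) u" if "u \<in> pp_set P" for u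
    using rank_pres[OF fP(1) lP fP(2) lQ b m that] .
  have L: "f (Inl x) \<in> Inl ` pp_set Q1" if x: "x \<in> pp_set P1" for x
  proof (rule ccontr)
    assume n: "f (Inl x) \<notin> Inl ` pp_set Q1"
    have "f (Inl x) \<in> pp_set Q" using img x sP by blast
    then obtain y where y: "y \<in> pp_set Q2" "f (Inl x) = Inr y" using n sQ by blast
    have "rank (pp_set Q) (pp_tle Q) (f (Inl x)) = card (pp_set Q1) + rank (pp_set Q2) (pp_tle Q2) y"
      unfolding sQ tQ y(2) by (rule rank_Inr[OF y(1) fin(2,4)])
    moreover have "rank (pp_set Q2) (pp_tle Q2) y \<ge> 1" using rank_range[OF fin(4) l(4) y(1)] by simp
    moreover have "rank (pp_set P) (pp_tle P) (Inl x) = rank (pp_set P1) (pp_tle P1) x"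
      unfolding sP tP by (rule rank_Inl[OF x])
    moreover have "rank (pp_set P1) (pp_tle P1) x \<le> card (pp_set P1)" using rank_range[OF fin(1) l(1) x] by simp
    ultimately show False using rk[of "Inl x"] x sP c1 by auto
  qed
  have R: "f (Inr y) \<in> Inr ` pp_set Q2" if y: "y \<in> pp_set P2" for y
  proof (rule ccontr)
    assume n: "f (Inr y) \<notin> Inr ` pp_set Q2"
    have "f (Inr y) \<in> pp_set Q" using img y sP by blast
    then obtain z where z: "z \<in> pp_set Q1" "f (Inr y) = Inl z" using n sQ by blast
    have "rank (pp_set Q) (pp_tle Q) (f (Inr y)) = rank (pp_set Q1) (pp_tle Q1) z"
      unfolding sQ tQ z(2) by (rule rank_Inl[OF z(1)])
    moreover have "rank (pp_set Q1) (pp_tle Q1) z \<le> card (pp_set Q1)" using rank_range[OF fin(2) l(2) z(1)] by simp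
    moreover have "rank (pp_set P) (pp_tle P) (Inr y) = card (pp_set P1) + rank (pp_set P2) (pp_tle P2) y"
      unfolding sP tP by (rule rank_Inr[OF y fin(1,3)])
    moreover have "rank (pp_set P2) (pp_tle P2) y \<ge> 1" using rank_range[OF fin(3) l(3) y] by simp
    ultimately show False using rk[of "Inr y"] y sP c1 by auto
  qed
  define f1 where "f1 = (\<lambda>x. projl (f (Inl x)))"
  define f2 where "f2 = (\<lambda>y. projr (f (Inr y)))"
  have e1: "f (Inl x) = Inl (f1 x) \<and> f1 x \<in> pp_set Q1" if "x \<in> pp_set P1" for x
    using L[OF that] unfolding f1_def by auto
  have e2: "f (Inr y) = Inr (f2 y) \<and> f2 y \<in> pp_set Q2" if "y \<in> pp_set P2" for y
    using R[OF that] unfolding f2_def by auto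
  have i1: "inj_on f1 (pp_set P1)"
  proof (rule inj_onI)
    fix x y assume "x \<in> pp_set P1" "y \<in> pp_set P1" "f1 x = f1 y"
    hence "f (Inl x) = f (Inl y)" using e1 by simp
    moreover have "Inl x \<in> pp_set P" "Inl y \<in> pp_set P" using sP \<open>x \<in> pp_set P1\<close> \<open>y \<in> pp_set P1\<close> by auto
    ultimately have "Inl x = Inl y" using inj unfolding inj_on_def by blast
    thus "x = y" by simp
  qed
  have i2: "inj_on f2 (pp_set P2)"
  proof (rule inj_onI)
    fix x y assume "x \<in> pp_set P2" "y \<in> pp_set P2" "f2 x = f2 y"
    hence "f (Inr x) = f (Inr y)" using e2 by simp
    moreover have "Inr x \<in> pp_set P" "Inr y \<in> pp_set P" using sP \<open>x \<in> pp_set P2\<close> \<open>y \<in> pp_set P2\<close> by auto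
    ultimately have "Inr x = Inr y" using inj unfolding inj_on_def by blast
    thus "x = y" by simp
  qed
  have s1: "f1 ` pp_set P1 = pp_set Q1"
  proof
    show "f1 ` pp_set P1 \<subseteq> pp_set Q1" using e1 by blast
    show "pp_set Q1 \<subseteq> f1 ` pp_set P1"
    proof
      fix z assume z: "z \<in> pp_set Q1"
      hence "Inl z \<in> f ` pp_set P" using img sQ by blast
      then obtain u where u: "u \<in> pp_set P" "Inl z = f u" by blast
      show "z \<in> f1 ` pp_set P1"
      proof (cases u)
        case (Inl x) thus ?thesis using u e1 sP by auto
      next
        case (Inr y) thus ?thesis using u e2 sP by auto
      qed
    qed
  qed
  have s2: "f2 ` pp_set P2 = pp_set Q2"
  proof
    show "f2 ` pp_set P2 \<subseteq> pp_set Q2" using e2 by blast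
    show "pp_set Q2 \<subseteq> f2 ` pp_set P2"
    proof
      fix z assume z: "z \<in> pp_set Q2"
      hence "Inr z \<in> f ` pp_set P" using img sQ by blast
      then obtain u where u: "u \<in> pp_set P" "Inr z = f u" by blast
      show "z \<in> f2 ` pp_set P2"
      proof (cases u)
        case (Inl x) thus ?thesis using u e1 sP by auto
      next
        case (Inr y) thus ?thesis using u e2 sP by auto
      qed
    qed
  qed
  have m1: "\<forall>x\<in>pp_set P1. \<forall>y\<in>pp_set P1. pp_tle P1 x y \<longrightarrow> pp_tle Q1 (f1 x) (f1 y)"
  proof (intro ballI impI)
    fix x y assume xy: "x \<in> pp_set P1" "y \<in> pp_set P1" "pp_tle P1 x y"
    hence "pp_tle Q (f (Inl x)) (f (Inl y))" using m sP tP by auto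
    thus "pp_tle Q1 (f1 x) (f1 y)" using e1 xy tQ by simp
  qed
  have m2: "\<forall>x\<in>pp_set P2. \<forall>y\<in>pp_set P2. pp_tle P2 x y \<longrightarrow> pp_tle Q2 (f2 x) (f2 y)"
  proof (intro ballI impI)
    fix x y assume xy: "x \<in> pp_set P2" "y \<in> pp_set P2" "pp_tle P2 x y"
    hence "pp_tle Q (f (Inr x)) (f (Inr y))" using m sP tP by auto
    thus "pp_tle Q2 (f2 x) (f2 y)" using e2 xy tQ by simp
  qed
  have "incr_bij P1 Q1 f1" unfolding incr_bij_def bij_betw_def using i1 s1 m1 by blast
  moreover have "incr_bij P2 Q2 f2" unfolding incr_bij_def bij_betw_def using i2 s2 m2 by blast
  ultimately show ?thesis using e1 e2 by blast
qed

lemma ex_incr: assumes "plane_poset P" "plane_poset Q" "card (pp_set P) = card (pp_set Q)"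
  shows "\<exists>f. incr_bij P Q f"
proof -
  have "finite (pp_set P)" "finite (pp_set Q)" using assms(1,2) unfolding plane_poset_def by auto
  then obtain f where "bij_betw f (pp_set P) (pp_set Q)"
    "\<forall>x\<in>pp_set P. \<forall>y\<in>pp_set P. pp_tle P x y \<longrightarrow> pp_tle Q (f x) (f y)"
    using exists_iso[OF _ lin_pp[OF assms(1)] _ lin_pp[OF assms(2)] assms(3)] by blast
  thus ?thesis unfolding incr_bij_def by blast
qed

lemma generic:
  assumes pp: "plane_poset P1" "plane_poset Q1" "plane_poset P2" "plane_poset Q2"
    and c1: "card (pp_set P1) = card (pp_set Q1)" and c2: "card (pp_set P2) = card (pp_set Q2)"
    and sP: "pp_set P = Inl ` pp_set P1 \<union> Inr ` pp_set P2" and tP: "pp_tle P = sumtle P1 P2"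
    and sQ: "pp_set Q = Inl ` pp_set Q1 \<union> Inr ` pp_set Q2" and tQ: "pp_tle Q = sumtle Q1 Q2"
    and hP1: "\<And>x y. pp_h P (Inl x) (Inl y) = pp_h P1 x y"
    and hP2: "\<And>x y. pp_h P (Inr x) (Inr y) = pp_h P2 x y"
    and hQ1: "\<And>x y. pp_h Q (Inl x) (Inl y) = pp_h Q1 x y"
    and hQ2: "\<And>x y. pp_h Q (Inr x) (Inr y) = pp_h Q2 x y"
    and hQ21: "\<And>x y. \<not> pp_h Q (Inr x) (Inl y)"
    and mix: "\<And>x y x' y'. x \<in> pp_set P1 \<Longrightarrow> y \<in> pp_set P2 \<Longrightarrow> pp_h Q (Inl x') (Inr y') \<Longrightarrow> pp_h P (Inl x) (Inr y)"
  shows "pp_le P Q \<longleftrightarrow> pp_le P1 Q1 \<and> pp_le P2 Q2"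
proof
  assume le: "pp_le P Q"
  obtain g1 where g1: "incr_bij P1 Q1 g1" using ex_incr[OF pp(1,2) c1] by blast
  obtain g2 where g2: "incr_bij P2 Q2 g2" using ex_incr[OF pp(3,4) c2] by blast
  have "pp_le P1 Q1" unfolding pp_le_def
  proof (intro allI impI ballI)
    fix f1 x y assume f1: "incr_bij P1 Q1 f1" and xy: "x \<in> pp_set P1" "y \<in> pp_set P1"
      and h: "pp_h Q1 (f1 x) (f1 y)"
    let ?f = "case_sum (Inl \<circ> f1) (Inr \<circ> g2)"
    have "incr_bij P Q ?f" by (rule compose[OF f1 g2 sP tP sQ tQ])
    moreover have "Inl x \<in> pp_set P" "Inl y \<in> pp_set P" using xy sP by auto
    moreover have "pp_h Q (?f (Inl x)) (?f (Inl y))" using h hQ1 by simp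
    ultimately have "pp_h P (Inl x) (Inl y)" using le unfolding pp_le_def by blast
    thus "pp_h P1 x y" using hP1 by simp
  qed
  moreover have "pp_le P2 Q2" unfolding pp_le_def
  proof (intro allI impI ballI)
    fix f2 x y assume f2: "incr_bij P2 Q2 f2" and xy: "x \<in> pp_set P2" "y \<in> pp_set P2"
      and h: "pp_h Q2 (f2 x) (f2 y)"
    let ?f = "case_sum (Inl \<circ> g1) (Inr \<circ> f2)"
    have "incr_bij P Q ?f" by (rule compose[OF g1 f2 sP tP sQ tQ])
    moreover have "Inr x \<in> pp_set P" "Inr y \<in> pp_set P" using xy sP by auto
    moreover have "pp_h Q (?f (Inr x)) (?f (Inr y))" using h hQ2 by simp
    ultimately have "pp_h P (Inr x) (Inr y)" using le unfolding pp_le_def by blast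
    thus "pp_h P2 x y" using hP2 by simp
  qed
  ultimately show "pp_le P1 Q1 \<and> pp_le P2 Q2" by blast
next
  assume "pp_le P1 Q1 \<and> pp_le P2 Q2"
  hence le1: "pp_le P1 Q1" and le2: "pp_le P2 Q2" by auto
  show "pp_le P Q" unfolding pp_le_def
  proof (intro allI impI ballI)
    fix f u v assume f: "incr_bij P Q f" and uv: "u \<in> pp_set P" "v \<in> pp_set P"
      and h: "pp_h Q (f u) (f v)"
    obtain f1 f2 where F: "incr_bij P1 Q1 f1" "incr_bij P2 Q2 f2"
      "\<forall>x\<in>pp_set P1. f (Inl x) = Inl (f1 x)" "\<forall>y\<in>pp_set P2. f (Inr y) = Inr (f2 y)"
      using decompose[OF pp c1 sP tP sQ tQ f] by blast
    show "pp_h P u v"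
    proof (cases u; cases v)
      fix x y assume u: "u = Inl x" and v: "v = Inl y"
      hence xy: "x \<in> pp_set P1" "y \<in> pp_set P1" using uv sP by auto
      hence "pp_h Q1 (f1 x) (f1 y)" using h F(3) u v hQ1 by simp
      hence "pp_h P1 x y" using le1 F(1) xy unfolding pp_le_def by blast
      thus ?thesis using u v hP1 by simp
    next
      fix x y assume u: "u = Inl x" and v: "v = Inr y"
      hence xy: "x \<in> pp_set P1" "y \<in> pp_set P2" using uv sP by auto
      hence "pp_h Q (Inl (f1 x)) (Inr (f2 y))" using h F(3,4) u v by simp
      thus ?thesis using mix[OF xy] u v by blast
    next
      fix x y assume u: "u = Inr x" and v: "v = Inl y"
      hence xy: "x \<in> pp_set P2" "y \<in> pp_set P1" using uv sP by auto
      hence "pp_h Q (Inr (f2 x)) (Inl (f1 y))" using h F(3,4) u v by simp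
      thus ?thesis using hQ21 by blast
    next
      fix x y assume u: "u = Inr x" and v: "v = Inr y"
      hence xy: "x \<in> pp_set P2" "y \<in> pp_set P2" using uv sP by auto
      hence "pp_h Q2 (f2 x) (f2 y)" using h F(4) u v hQ2 by simp
      hence "pp_h P2 x y" using le2 F(2) xy unfolding pp_le_def by blast
      thus ?thesis using u v hP2 by simp
    qed
  qed
qed

theorem proposition16:
  fixes P1 :: "'a pp" and Q1 :: "'c pp" and P2 :: "'b pp" and Q2 :: "'d pp"
    and k l :: nat
  assumes "plane_poset P1" and "plane_poset Q1"
    and "plane_poset P2" and "plane_poset Q2"
    and "card (pp_set P1) = k" and "card (pp_set Q1) = k"
    and "card (pp_set P2) = l" and "card (pp_set Q2) = l"
  shows "(pp_le (pp_prod P1 P2) (pp_prod Q1 Q2) \<longleftrightarrow> pp_le (pp_tri P1 P2) (pp_tri Q1 Q2))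
       \<and> (pp_le (pp_tri P1 P2) (pp_tri Q1 Q2) \<longleftrightarrow> pp_le P1 Q1 \<and> pp_le P2 Q2)"
proof -
  have c1: "card (pp_set P1) = card (pp_set Q1)" and c2: "card (pp_set P2) = card (pp_set Q2)"
    using assms by auto
  have A: "pp_le (pp_prod P1 P2) (pp_prod Q1 Q2) \<longleftrightarrow> pp_le P1 Q1 \<and> pp_le P2 Q2"
    by (rule generic[OF assms(1-4) c1 c2 set_prod tle_prod set_prod tle_prod])
       (simp_all add: pp_h_def pp_prod_def)
  have B: "pp_le (pp_tri P1 P2) (pp_tri Q1 Q2) \<longleftrightarrow> pp_le P1 Q1 \<and> pp_le P2 Q2"
    by (rule generic[OF assms(1-4) c1 c2 set_tri tle_tri set_tri tle_tri])
       (simp_all add: pp_h_def pp_tri_def pp_set_def)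
  show ?thesis using A B by blast
qed

end
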